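(* Let $n\ge 1$ and let $\mathbb{F}_q$ be a finite field. The adjacency matrix of the unit-graph on $\operatorname{Mat}_n(\mathbb{F}_q)$ has at most $n+1$ distinct eigenvalues.
   Context: The unit-graph on $\operatorname{Mat}_n(\mathbb{F}_q)$ is the Cayley digraph $\operatorname{Cay}(\operatorname{Mat}_n(\mathbb{F}_q), \operatorname{GL}_n(\mathbb{F}_q))$: its vertex set is $\operatorname{Mat}_n(\mathbb{F}_q)$ and there is a directed edge from $A$ to $B$ iff $B - A$ is invertible; it is regarded as an undirected graph since $\operatorname{GL}_n(\mathbb{F}_q)$ is closed under negation. *)

theory Defs
  imports "HOL-Analysis.Analysis"
begin

text \<open>Adjacency matrix of the unit-graph Cay(Mat_n(F_q), GL_n(F_q)):
  rows and columns indexed by n x n matrices over the finite field 'a;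
  entry (A,B) is 1 iff B - A is invertible, else 0. Complex entries.\<close>
definition unit_graph_adjacency ::
  "complex ^ ('a::{field,finite} ^'n::finite^'n) ^ ('a^'n^'n)" where
  "unit_graph_adjacency = (\<chi> A B. if invertible (B - A) then 1 else 0)"

text \<open>Eigenvalue of a square matrix (over the complex numbers).\<close>
definition is_eigenvalue :: "complex ^'m::finite ^'m \<Rightarrow> complex \<Rightarrow> bool" where
  "is_eigenvalue M c \<longleftrightarrow> (\<exists>v. v \<noteq> 0 \<and> M *v v = c *s v)"

end

theory Submission
  imports Defs
begin

lemma rank_nullity_vec:
  fixes f :: "'a::field^'n \<Rightarrow> 'a^'n"
  assumes lf: "Vector_Spaces.linear (*s) (*s) f"
  shows "vec.dim {x. f x = 0} + vec.dim (range f) = CARD('n)"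
proof -
  interpret lf: Vector_Spaces.linear "(*s)" "(*s)" f by (rule lf)
  obtain E where E: "E \<subseteq> range f" "vec.independent E" "range f \<subseteq> vec.span E" "card E = vec.dim (range f)"
    by (rule vec.basis_exists)
  have fE: "finite E" using E(2) vec.finiteI_independent by blast
  define p where "p e = (SOME x. f x = e)" for e
  have fp: "f (p e) = e" if "e \<in> E" for e
    using that E(1) unfolding p_def by (metis (mono_tags, lifting) imageE someI subsetD)
  define S where "S = p ` E"
  have fS: "f ` S = E" using fp unfolding S_def by (force simp: image_image)
  have injp: "inj_on p E" by (metis fp inj_on_inverseI)
  have injf: "inj_on f S" unfolding S_def using fp by (smt (verit) imageE inj_on_def)
  have finS: "finite S" using fE S_def by simp
  have cardS: "card S = card E" unfolding S_def using injp card_image by blast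
  have dS: "vec.dim (vec.span S) = card E"
  proof -
    have "vec.dim (vec.span S) \<le> card E" using vec.dim_le_card[of "vec.span S" S] finS cardS by simp
    moreover have "vec.dim (f ` S) \<le> vec.dim S" by (rule vec.dim_image_le[OF lf])
    moreover have "vec.dim (f ` S) = card E" using fS E(2) vec.dim_eq_card_independent by simp
    ultimately show ?thesis by simp
  qed
  have int: "{x. f x = 0} \<inter> vec.span S = {0}"
    using vec.linear_indep_image_lemma[OF lf finS _ injf] fS E(2) vec.span_zero lf.zero by auto
  have sum: "{x + y |x y. x \<in> {x. f x = 0} \<and> y \<in> vec.span S} = UNIV"
  proof safe
    fix w
    have "f w \<in> vec.span E" using E(3) by auto
    also have "vec.span E = f ` vec.span S" using fS vec.linear_span_image[OF lf, of S] by simp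
    finally obtain s where s: "s \<in> vec.span S" "f w = f s" by auto
    have "f (w - s) = 0" using s lf.diff by simp
    then show "\<exists>x y. w = x + y \<and> x \<in> {x. f x = 0} \<and> y \<in> vec.span S"
      using s by (intro exI[of _ "w - s"] exI[of _ s]) auto
  qed simp
  have ssub: "vec.subspace {x. f x = 0}"
    unfolding vec.subspace_def using lf.add lf.scale lf.zero by auto
  have "vec.dim {x + y |x y. x \<in> {x. f x = 0} \<and> y \<in> vec.span S} + vec.dim ({x. f x = 0} \<inter> vec.span S)
     = vec.dim {x. f x = 0} + vec.dim (vec.span S)"
    by (rule vec.dim_sums_Int[OF ssub vec.subspace_span])
  then show ?thesis using sum int dS E(4) vec_dim_card[where 'a='a and 'n='n] by simp
qed

lemma same_range_factor:
  fixes F g :: "'a::field^'n \<Rightarrow> 'a^'n"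
  assumes lF: "Vector_Spaces.linear (*s) (*s) F" and lg: "Vector_Spaces.linear (*s) (*s) g"
    and rg: "range F = range g"
  shows "\<exists>h. Vector_Spaces.linear (*s) (*s) h \<and> bij h \<and> g = F \<circ> h"
proof -
  interpret lF: Vector_Spaces.linear "(*s)" "(*s)" F by (rule lF)
  interpret lg: Vector_Spaces.linear "(*s)" "(*s)" g by (rule lg)
  have dk: "vec.dim {x. g x = 0} = vec.dim {x. F x = 0}"
    using rank_nullity_vec[OF lF] rank_nullity_vec[OF lg] rg by simp
  obtain K where K: "K \<subseteq> {x. g x = 0}" "vec.independent K" "{x. g x = 0} \<subseteq> vec.span K" "card K = vec.dim {x. g x = 0}"
    by (rule vec.basis_exists)
  obtain L where L: "L \<subseteq> {x. F x = 0}" "vec.independent L" "{x. F x = 0} \<subseteq> vec.span L" "card L = vec.dim {x. F x = 0}"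
    by (rule vec.basis_exists)
  have fK: "finite K" "finite L" using K(2) L(2) vec.finiteI_independent by blast+
  obtain \<sigma> where \<sigma>: "bij_betw \<sigma> K L"
    using fK K(4) L(4) dk by (metis bij_betw_iff_card)
  define B where "B = vec.extend_basis K"
  have B: "vec.independent B" "K \<subseteq> B" "vec.span B = UNIV"
    unfolding B_def using K(2) vec.independent_extend_basis vec.extend_basis_superset vec.span_extend_basis by auto
  define p where "p b = (SOME x. F x = g b)" for b
  have Fp: "F (p b) = g b" for b
  proof -
    have "g b \<in> range F" using rg by auto
    then show ?thesis unfolding p_def by (metis (mono_tags, lifting) imageE someI)
  qed
  define v where "v b = (if b \<in> K then \<sigma> b else p b)" for b
  define h where "h = vec.construct B v"
  have lh: "Vector_Spaces.linear (*s) (*s) h" unfolding h_def by (rule vec.linear_construct[OF B(1)])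
  interpret lh: Vector_Spaces.linear "(*s)" "(*s)" h by (rule lh)
  have hb: "h b = v b" if "b \<in> B" for b unfolding h_def using vec.construct_basis[OF B(1) that] .
  have lFh: "Vector_Spaces.linear (*s) (*s) (F \<circ> h)"
    using lh lF by (rule Vector_Spaces.linear_compose)
  have eqB: "(F \<circ> h) b = g b" if "b \<in> B" for b
  proof (cases "b \<in> K")
    case True
    then have "\<sigma> b \<in> L" using \<sigma> bij_betwE by blast
    then show ?thesis using True hb[OF that] K(1) L(1) unfolding v_def by force
  next
    case False
    then show ?thesis using hb[OF that] Fp unfolding v_def by simp
  qed
  have eq: "g = F \<circ> h"
  proof
    fix x
    show "g x = (F \<circ> h) x"
      using vec.linear_eq_on[OF lFh lg, of x B] eqB B(3) by auto
  qed
  have Lsub: "L \<subseteq> range h"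
  proof
    fix l assume "l \<in> L"
    then obtain k where k: "k \<in> K" "l = \<sigma> k" using \<sigma> by (metis bij_betw_imp_surj_on imageE)
    then have "h k = l" using hb B(2) unfolding v_def by auto
    then show "l \<in> range h" by auto
  qed
  have spanh: "vec.span (range h) = range h"
    using vec.linear_span_image[OF lh, of UNIV] by (simp add: vec.span_UNIV)
  have kerF: "{x. F x = 0} \<subseteq> range h"
    using L(3) vec.span_mono[OF Lsub] spanh by auto
  have "surj h"
  proof -
    { fix w
      have "F w \<in> range g" using rg by auto
      then obtain u where "F w = F (h u)" using eq by auto
      then have "F (w - h u) = 0" using lF.diff by simp
      then have "w - h u \<in> range h" using kerF by auto
      then obtain u' where "w - h u = h u'" by auto
      then have "w = h (u + u')" using lh.add by (metis diff_eq_eq add.commute)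
      then have "w \<in> range h" by auto }
    then show ?thesis by auto
  qed
  then have "bij h" using vec.linear_surj_imp_inj[OF lh] by (simp add: bij_def)
  then show ?thesis using lh eq by blast
qed

lemma same_dim_factor:
  fixes f g :: "'a::field^'n \<Rightarrow> 'a^'n"
  assumes lf: "Vector_Spaces.linear (*s) (*s) f" and lg: "Vector_Spaces.linear (*s) (*s) g"
    and d: "vec.dim (range f) = vec.dim (range g)"
  shows "\<exists>h1 h2. Vector_Spaces.linear (*s) (*s) h1 \<and> bij h1 \<and> Vector_Spaces.linear (*s) (*s) h2 \<and> bij h2
     \<and> g = h1 \<circ> f \<circ> h2"
proof -
  obtain E where E: "E \<subseteq> range f" "vec.independent E" "range f \<subseteq> vec.span E" "card E = vec.dim (range f)"
    by (rule vec.basis_exists)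
  obtain E' where E': "E' \<subseteq> range g" "vec.independent E'" "range g \<subseteq> vec.span E'" "card E' = vec.dim (range g)"
    by (rule vec.basis_exists)
  have fE: "finite E" "finite E'" using E(2) E'(2) vec.finiteI_independent by blast+
  obtain \<tau> where \<tau>: "bij_betw \<tau> E E'"
    using fE E(4) E'(4) d by (metis bij_betw_iff_card)
  have "\<tau> ` E = E'" "inj_on \<tau> E" using \<tau> by (auto simp: bij_betw_def)
  then obtain h1 where h1: "Vector_Spaces.linear (*s) (*s) h1" "inj h1" "\<forall>x\<in>E. h1 x = \<tau> x"
    using vec.linear_independent_extend_inj[OF E(2), of \<tau>] E'(2) by auto
  have bh1: "bij h1" using h1 vec.linear_inj_imp_surj by (auto simp: bij_def)
  have h1E: "h1 ` E = E'" using h1(3) \<open>\<tau> ` E = E'\<close> by (metis image_cong)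
  have spf: "vec.span (range f) = range f"
    using vec.linear_span_image[OF lf, of UNIV] by (simp add: vec.span_UNIV)
  have spg: "vec.span (range g) = range g"
    using vec.linear_span_image[OF lg, of UNIV] by (simp add: vec.span_UNIV)
  have rf: "range f = vec.span E"
    using E(1,3) vec.span_mono[OF E(1)] spf vec.span_minimal vec.subspace_span by (metis subset_antisym)
  have rg: "range g = vec.span E'"
    using E'(1,3) vec.span_mono[OF E'(1)] spg by (metis subset_antisym)
  have lF: "Vector_Spaces.linear (*s) (*s) (h1 \<circ> f)"
    using lf h1(1) by (rule Vector_Spaces.linear_compose)
  have "range (h1 \<circ> f) = h1 ` range f" by (simp add: image_comp)
  also have "\<dots> = vec.span E'" using rf vec.linear_span_image[OF h1(1), of E] h1E by simp
  finally have "range (h1 \<circ> f) = range g" using rg by simp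
  then obtain h2 where "Vector_Spaces.linear (*s) (*s) h2" "bij h2" "g = (h1 \<circ> f) \<circ> h2"
    using same_range_factor[OF lF lg] by blast
  then show ?thesis using h1(1) bh1 by blast
qed

definition rk :: "'a::field^'n^'n \<Rightarrow> nat" where
  "rk X = vec.dim (range (\<lambda>x. X *v x))"

lemma invertible_of_bij:
  fixes h :: "'a::field^'n \<Rightarrow> 'a^'n"
  assumes lh: "Vector_Spaces.linear (*s) (*s) h" and b: "bij h"
  shows "invertible (matrix h)"
proof -
  obtain k where "Vector_Spaces.linear (*s) (*s) k" "h \<circ> k = id"
    using vec.linear_surjective_right_inverse[OF lh] b bij_is_surj by blast
  then have "\<exists>B. matrix h ** B = mat 1" using matrix_right_invertible_gen[OF lh] by blast
  then show ?thesis using invertible_right_inverse by blast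
qed

lemma rk_equiv:
  fixes X Y :: "'a::field^'n^'n"
  assumes "rk X = rk Y"
  shows "\<exists>P Q. invertible P \<and> invertible Q \<and> Y = P ** X ** Q"
proof -
  obtain h1 h2 where h: "Vector_Spaces.linear (*s) (*s) h1" "bij h1" "Vector_Spaces.linear (*s) (*s) h2" "bij h2"
     "(\<lambda>x. Y *v x) = h1 \<circ> (\<lambda>x. X *v x) \<circ> h2"
    using same_dim_factor[of "\<lambda>x. X *v x" "\<lambda>x. Y *v x"] assms unfolding rk_def by auto
  have "Y = matrix h1 ** X ** matrix h2"
    unfolding matrix_eq
  proof
    fix x
    have "Y *v x = h1 (X *v h2 x)" using h(5) by (metis comp_apply)
    also have "\<dots> = matrix h1 ** X ** matrix h2 *v x"
      by (simp add: matrix_works[OF h(1)] matrix_works[OF h(3)] matrix_vector_mul_assoc[symmetric])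
    finally show "Y *v x = matrix h1 ** X ** matrix h2 *v x" .
  qed
  then show ?thesis using invertible_of_bij h by blast
qed

lemma rk_mult_inv:
  fixes X P Q :: "'a::field^'n^'n"
  assumes P: "invertible P" and Q: "invertible Q"
  shows "rk (P ** X ** Q) = rk X"
proof -
  have sQ: "surj (\<lambda>x. Q *v x)" using Q invertible_right_inverse matrix_right_invertible_surjective by blast
  have iP: "inj (\<lambda>x. P *v x)" using P invertible_left_inverse matrix_left_invertible_injective by blast
  have "range (\<lambda>x. (P ** X ** Q) *v x) = (\<lambda>x. P *v x) ` (\<lambda>x. X *v x) ` range (\<lambda>x. Q *v x)"
    by (auto simp: matrix_vector_mul_assoc[symmetric] image_iff)
  also have "\<dots> = (\<lambda>x. P *v x) ` range (\<lambda>x. X *v x)" using sQ by simp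
  finally show ?thesis unfolding rk_def
    using vec.dim_image_eq[OF matrix_vector_mul_linear_gen, of P "range (\<lambda>x. X *v x)"] iP
    by (simp add: inj_on_subset)
qed

lemma rk_le: "rk (X::'a::field^'n^'n) \<le> CARD('n)"
  unfolding rk_def by (rule dim_subset_UNIV_cart_gen)

lemma rk_0_iff: "rk (X::'a::field^'n^'n) = 0 \<longleftrightarrow> X = 0"
proof
  assume "rk X = 0"
  then have "range (\<lambda>x. X *v x) \<subseteq> {0}" unfolding rk_def by simp
  then show "X = 0" unfolding matrix_eq by auto
next
  assume "X = 0" then show "rk X = 0" unfolding rk_def by auto
qed

lemma mult_diff_distrib3:
  fixes P Y Z Q :: "'a::field^'n^'n"
  shows "P ** (Y - Z) ** Q = P ** Y ** Q - P ** Z ** Q"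
  unfolding matrix_eq
  by (simp add: matrix_vector_mul_assoc[symmetric] matrix_vector_mult_diff_rdistrib matrix_vector_mult_diff_distrib)

lemma invertible_mult3_iff:
  fixes P Z Q :: "'a::field^'n^'n"
  assumes P: "invertible P" and Q: "invertible Q"
  shows "invertible (P ** Z ** Q) \<longleftrightarrow> invertible Z"
proof
  assume i: "invertible (P ** Z ** Q)"
  obtain P' where P': "P' ** P = mat 1" "P ** P' = mat 1" using P unfolding invertible_def by blast
  obtain Q' where Q': "Q' ** Q = mat 1" "Q ** Q' = mat 1" using Q unfolding invertible_def by blast
  have iP': "invertible P'" "invertible Q'" using P' Q' unfolding invertible_def by blast+
  have "Z = P' ** (P ** Z ** Q) ** Q'"
    by (simp add: matrix_mul_assoc P'(1)) (simp add: matrix_mul_assoc[symmetric] Q'(2))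
  then show "invertible Z" using i iP' invertible_mult by metis
next
  assume "invertible Z" then show "invertible (P ** Z ** Q)" using P Q invertible_mult by blast
qed

lemma bij_mult3:
  fixes P Q :: "'a::field^'n^'n"
  assumes P: "invertible P" and Q: "invertible Q"
  shows "bij (\<lambda>Z. P ** Z ** Q)"
proof -
  obtain P' where P': "P' ** P = mat 1" "P ** P' = mat 1" using P unfolding invertible_def by blast
  obtain Q' where Q': "Q' ** Q = mat 1" "Q ** Q' = mat 1" using Q unfolding invertible_def by blast
  show ?thesis
  proof (rule o_bij[of "\<lambda>Z. P' ** Z ** Q'"])
    show "(\<lambda>Z. P' ** Z ** Q') \<circ> (\<lambda>Z. P ** Z ** Q) = id"
      by (auto simp: fun_eq_iff matrix_mul_assoc P'(1)) (simp add: matrix_mul_assoc[symmetric] Q'(2))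
    show "(\<lambda>Z. P ** Z ** Q) \<circ> (\<lambda>Z. P' ** Z ** Q') = id"
      by (auto simp: fun_eq_iff matrix_mul_assoc P'(2)) (simp add: matrix_mul_assoc[symmetric] Q'(1))
  qed
qed

definition Gs :: "(nat \<Rightarrow> complex) \<Rightarrow> 'a::{field,finite}^'n::finite^'n \<Rightarrow> complex" where
  "Gs f Y = (\<Sum>X\<in>UNIV. f (rk X) * (if invertible (Y - X) then 1 else 0))"

lemma Gs_inv:
  fixes Y Y' :: "'a::{field,finite}^'n::finite^'n"
  assumes "rk Y = rk Y'"
  shows "Gs f Y = Gs f Y'"
proof -
  obtain P Q where PQ: "invertible P" "invertible Q" "Y' = P ** Y ** Q" using rk_equiv[OF assms] by blast
  have b: "bij_betw (\<lambda>Z. P ** Z ** Q) UNIV UNIV" using bij_mult3[OF PQ(1,2)] by simp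
  have "Gs f Y' = (\<Sum>X\<in>UNIV. f (rk X) * (if invertible (P ** Y ** Q - X) then 1 else 0))"
    unfolding Gs_def PQ(3) ..
  also have "\<dots> = (\<Sum>Z\<in>UNIV. f (rk (P ** Z ** Q)) * (if invertible (P ** Y ** Q - P ** Z ** Q) then 1 else 0))"
    by (rule sum.reindex_bij_betw[OF b, symmetric])
  also have "\<dots> = Gs f Y"
    unfolding Gs_def
    by (simp add: rk_mult_inv[OF PQ(1,2)] mult_diff_distrib3[symmetric] invertible_mult3_iff[OF PQ(1,2)])
  finally show ?thesis by simp
qed

fun mpow :: "complex^'m^'m \<Rightarrow> nat \<Rightarrow> complex^'m^'m" where
  "mpow M 0 = mat 1"
| "mpow M (Suc k) = mpow M k ** M"

lemma adj_entry: "(unit_graph_adjacency :: complex ^ ('a::{field,finite}^'n::finite^'n) ^ ('a^'n^'n)) $ A $ B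
   = (if invertible (B - A) then 1 else 0)"
  unfolding unit_graph_adjacency_def by simp

lemma mpow_rk:
  "\<exists>f. \<forall>A B. mpow (unit_graph_adjacency :: complex ^ ('a::{field,finite}^'n::finite^'n) ^ ('a^'n^'n)) k $ A $ B
     = f (rk (B - A))"
proof (induction k)
  case 0
  show ?case
    by (rule exI[of _ "\<lambda>r. if r = 0 then 1 else 0"]) (auto simp: mat_def rk_0_iff)
next
  case (Suc k)
  then obtain f where f: "\<And>A B. mpow (unit_graph_adjacency :: complex ^ ('a::{field,finite}^'n::finite^'n) ^ ('a^'n^'n)) k $ A $ B
     = f (rk (B - A))" by blast
  define f' where "f' r = Gs f (SOME Y::'a^'n^'n. rk Y = r)" for r
  show ?case
  proof (intro exI allI)
    fix A B :: "'a^'n^'n"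
    have b: "bij_betw (\<lambda>X. A + X) UNIV UNIV"
      by (rule bij_betwI[of _ _ _ "\<lambda>X. X - A"]) auto
    have "mpow (unit_graph_adjacency :: complex ^ ('a^'n^'n) ^ ('a^'n^'n)) (Suc k) $ A $ B
        = (\<Sum>C\<in>UNIV. f (rk (C - A)) * (if invertible (B - C) then 1 else 0))"
      by (simp add: matrix_matrix_mult_def f adj_entry)
    also have "\<dots> = (\<Sum>X\<in>UNIV. f (rk (A + X - A)) * (if invertible (B - (A + X)) then 1 else 0))"
      by (rule sum.reindex_bij_betw[OF b, symmetric])
    also have "\<dots> = Gs f (B - A)" unfolding Gs_def by (simp add: algebra_simps)
    also have "\<dots> = f' (rk (B - A))" unfolding f'_def
      by (rule Gs_inv) (rule someI[of "\<lambda>Y. rk Y = rk (B - A)", symmetric], rule refl)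
    finally show "mpow (unit_graph_adjacency :: complex ^ ('a^'n^'n) ^ ('a^'n^'n)) (Suc k) $ A $ B = f' (rk (B - A))" .
  qed
qed

lemma dependency_exists:
  fixes F :: "nat \<Rightarrow> nat \<Rightarrow> complex" and N :: nat
  assumes N: "N = CARD('n::finite)"
  shows "\<exists>a. (\<exists>k\<le>N+1. a k \<noteq> 0) \<and> (\<forall>r\<le>N. (\<Sum>k\<le>N+1. a k * F k r) = 0)"
proof -
  have "card (UNIV :: 'n option set) = card {0..N}" using N by (simp add: card_UNIV_option)
  then obtain e :: "'n option \<Rightarrow> nat" where e: "bij_betw e UNIV {0..N}"
    using bij_betw_iff_card[of "UNIV :: 'n option set" "{0..N}"] by auto
  have esurj: "\<exists>i. e i = r" if "r \<le> N" for r
    using e that by (metis atLeastAtMost_iff bij_betw_imp_surj_on imageE le0 UNIV_I)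
  define w where "w k = (\<chi> i. F k (e i))" for k
  show ?thesis
  proof (cases "inj_on w {..N+1}")
    case False
    then obtain j k where jk: "j \<le> N+1" "k \<le> N+1" "j \<noteq> k" "w j = w k"
      unfolding inj_on_def by auto
    define a where "a m = (if m = j then 1 else if m = k then -1 else (0::complex))" for m
    show ?thesis
    proof (rule exI[of _ a], intro conjI allI impI)
      show "\<exists>k\<le>N+1. a k \<noteq> 0" using jk unfolding a_def by auto
      fix r assume "r \<le> N"
      then obtain i where i: "e i = r" using esurj by blast
      have Fjk: "F j r = F k r" using arg_cong[OF jk(4), of "\<lambda>v. v $ i"] i unfolding w_def by simp
      have "(\<Sum>m\<le>N+1. a m * F m r) = (\<Sum>m\<in>{j,k}. a m * F m r)"
        by (rule sum.mono_neutral_right) (use jk in \<open>auto simp: a_def\<close>)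
      also have "\<dots> = 0" using jk Fjk by (simp add: a_def)
      finally show "(\<Sum>m\<le>N+1. a m * F m r) = 0" .
    qed
  next
    case True
    let ?S = "w ` {..N+1}"
    have cS: "card ?S = N + 2" using card_image[OF True] by simp
    have "vec.dim ?S \<le> N + 1" using dim_subset_UNIV_cart_gen[of ?S] N by (simp add: card_UNIV_option)
    then have "vec.dependent ?S" using cS by (intro vec.dependent_biggerset_general) simp
    then obtain T u where T: "finite T" "T \<subseteq> ?S" "(\<Sum>v\<in>T. u v *s v) = 0" "\<exists>v\<in>T. u v \<noteq> 0"
      unfolding vec.dependent_explicit by blast
    define K where "K = {k\<in>{..N+1}. w k \<in> T}"
    have TK: "T = w ` K" using T(2) unfolding K_def by auto
    have injK: "inj_on w K" using True unfolding K_def by (rule inj_on_subset) auto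
    define a where "a k = (if k \<in> K then u (w k) else 0)" for k
    have sumK: "(\<Sum>k\<le>N+1. a k *s w k) = 0"
    proof -
      have "(\<Sum>k\<le>N+1. a k *s w k) = (\<Sum>k\<in>K. u (w k) *s w k)"
        by (rule sum.mono_neutral_cong_right) (auto simp: a_def K_def)
      also have "\<dots> = (\<Sum>v\<in>T. u v *s v)" unfolding TK using sum.reindex[OF injK, of "\<lambda>v. u v *s v"] by simp
      finally show ?thesis using T(3) by simp
    qed
    show ?thesis
    proof (rule exI[of _ a], intro conjI allI impI)
      obtain v where v: "v \<in> T" "u v \<noteq> 0" using T(4) by blast
      then obtain k where "k \<in> K" "v = w k" using TK by auto
      then show "\<exists>k\<le>N+1. a k \<noteq> 0" using v unfolding a_def K_def by auto
      fix r assume "r \<le> N"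
      then obtain i where i: "e i = r" using esurj by blast
      have "(\<Sum>k\<le>N+1. a k *s w k) $ i = 0" using sumK by simp
      then show "(\<Sum>k\<le>N+1. a k * F k r) = 0" using i by (simp add: w_def sum_component)
    qed
  qed
qed

lemma mpow_eigen:
  fixes M :: "complex^'m::finite^'m"
  assumes "M *v v = c *s v"
  shows "mpow M k *v v = c ^ k *s v"
proof (induction k)
  case 0 then show ?case by simp
next
  case (Suc k)
  have "mpow M (Suc k) *v v = mpow M k *v (M *v v)" by (simp add: matrix_vector_mul_assoc)
  also have "\<dots> = c *s (c ^ k *s v)" using Suc assms by (simp add: vector_scalar_commute)
  finally show ?case by (simp add: mult.commute)
qed

theorem proposition3p2:
  shows "finite {c. is_eigenvalue (unit_graph_adjacency :: complex ^ ('a::{field,finite}^'n::finite^'n) ^ ('a^'n^'n)) c}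
       \<and> card {c. is_eigenvalue (unit_graph_adjacency :: complex ^ ('a::{field,finite}^'n::finite^'n) ^ ('a^'n^'n)) c}
           \<le> CARD('n) + 1"
proof -
  let ?M = "unit_graph_adjacency :: complex ^ ('a::{field,finite}^'n::finite^'n) ^ ('a^'n^'n)"
  define N where "N = CARD('n)"
  define F where "F k = (SOME f. \<forall>A B. mpow ?M k $ A $ B = f (rk (B - A)))" for k
  have F: "mpow ?M k $ A $ B = F k (rk (B - A))" for k A B
    using someI_ex[OF mpow_rk[where k=k and 'a='a and 'n='n]] unfolding F_def by blast
  obtain a where a: "\<exists>k\<le>N+1. a k \<noteq> 0" "\<And>r. r \<le> N \<Longrightarrow> (\<Sum>k\<le>N+1. a k * F k r) = 0"
    using dependency_exists[OF N_def, of F] by blast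
  define p where "p = (\<Sum>k\<le>N+1. monom (a k) k)"
  have cp: "coeff p m = (if m \<le> N+1 then a m else 0)" for m
    unfolding p_def coeff_sum by (auto simp: coeff_monom)
  have p0: "p \<noteq> 0" using a(1) cp by (metis coeff_0)
  have dp: "degree p \<le> N+1" by (rule degree_le) (simp add: cp)
  have pp: "poly p x = (\<Sum>k\<le>N+1. a k * x ^ k)" for x
    unfolding p_def poly_sum by (simp add: poly_monom)
  have sub: "{c. is_eigenvalue ?M c} \<subseteq> {x. poly p x = 0}"
  proof safe
    fix c assume "is_eigenvalue ?M c"
    then obtain v where v: "v \<noteq> 0" "?M *v v = c *s v" unfolding is_eigenvalue_def by blast
    obtain A where A: "v $ A \<noteq> 0" using v(1) by (metis vec_eq_iff zero_index)
    have "(\<Sum>k\<le>N+1. a k * (mpow ?M k *v v) $ A) = (\<Sum>B\<in>UNIV. (\<Sum>k\<le>N+1. a k * F k (rk (B - A))) * v $ B)"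
    proof -
      have "(\<Sum>k\<le>N+1. a k * (mpow ?M k *v v) $ A) = (\<Sum>k\<le>N+1. \<Sum>B\<in>UNIV. a k * F k (rk (B - A)) * v $ B)"
        unfolding matrix_vector_mult_def by (simp only: vec_lambda_beta F sum_distrib_left mult.assoc)
      also have "\<dots> = (\<Sum>B\<in>UNIV. \<Sum>k\<le>N+1. a k * F k (rk (B - A)) * v $ B)"
        by (rule sum.swap)
      also have "\<dots> = (\<Sum>B\<in>UNIV. (\<Sum>k\<le>N+1. a k * F k (rk (B - A))) * v $ B)"
        by (simp only: sum_distrib_right)
      finally show ?thesis .
    qed
    also have "\<dots> = 0"
    proof (rule sum.neutral, rule ballI)
      fix B :: "'a^'n^'n"
      have "rk (B - A) \<le> N" using rk_le[of "B - A"] N_def by simp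
      then show "(\<Sum>k\<le>N+1. a k * F k (rk (B - A))) * v $ B = 0" using a(2) by simp
    qed
    finally have "(\<Sum>k\<le>N+1. a k * (mpow ?M k *v v) $ A) = 0" .
    moreover have "(\<Sum>k\<le>N+1. a k * (mpow ?M k *v v) $ A) = poly p c * v $ A"
      unfolding pp sum_distrib_right by (rule sum.cong) (simp_all add: mpow_eigen[OF v(2)])
    ultimately have "poly p c * v $ A = 0" by simp
    then show "poly p c = 0" using A by simp
  qed
  have fin: "finite {x. poly p x = 0}" using poly_roots_finite[OF p0] .
  have "card {c. is_eigenvalue ?M c} \<le> card {x. poly p x = 0}" by (rule card_mono[OF fin sub])
  also have "\<dots> \<le> degree p" by (rule card_poly_roots_bound[OF p0])
  finally show ?thesis using finite_subset[OF sub fin] dp N_def by simp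
qed

end
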